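(* Fix $k\in\mathbb N$ and consider the atom–cavity coefficients on $\mathcal D=\mathcal H'\odot\mathcal D'$ described in the context. Then there exists $\varepsilon>0$ such that for every $u\in\mathcal D$ there are constants $c(\ell,u)\ge0$, $\ell\in\mathbb N$, with $\sum_{\ell=1}^\infty c(\ell,u)\varepsilon^\ell<\infty$ and $$\|X(1)X(2)\cdots X(\ell)u\|\le c(\ell,u)\sqrt{(\ell+m)!}$$ for every $\ell\in\mathbb N$ and every choice of $X(1),\dots,X(\ell)$ from $\{K^{(k)},K^{(k)*},L^{(k)}_i,L^{(k)*}_i,M^{(k)}_i,M^{(k)*}_i,N^{(k)}_{ij},N^{(k)*}_{ij}:1\le i,j\le n\}$ (adjoints taken formally on $\mathcal D$), where $m$ is the number of occurrences of $K^{(k)}$ or $K^{(k)*}$ among $X(1),\dots,X(\ell)$.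
   Context: $\mathcal H'$ is a separable complex Hilbert space, $\{\varphi_i\}_{i\in\mathbb Z_+}$ is the canonical basis of $\ell^2(\mathbb Z_+)$, and $b^\dagger\varphi_i=\sqrt{i+1}\varphi_{i+1}$, $b\varphi_i=\sqrt i\varphi_{i-1}$, $b^\dagger b\varphi_i=i\varphi_i$ on $\mathcal D'=\mathrm{span}\{\varphi_i\}$. $\mathcal H=\mathcal H'\otimes\ell^2(\mathbb Z_+)$ and $\mathcal D=\mathcal H'\odot\mathcal D'$ (algebraic tensor product). For $n\in\mathbb N$, $1\le i,j\le n$, the coefficients are $N^{(k)}_{ij}=S^{(k)}_{ij}$, $L^{(k)}_i=F^{(k)}_ib^\dagger+G^{(k)}_i$, $K^{(k)}=E^{(k)}_{11}b^\dagger b+E^{(k)}_{10}b^\dagger+E^{(k)}_{01}b+E^{(k)}_{00}$, where $E^{(k)}_{pq},F^{(k)}_i,G^{(k)}_i,S^{(k)}_{ij}$ are bounded operators on $\mathcal H'$, and these satisfy on $\mathcal D$ the Hudson–Parthasarathy relations $K^{(k)}+K^{(k)\dagger}=-\sum_iL^{(k)}_iL^{(k)\dagger}_i$, $\sum_jN^{(k)}_{mj}N^{(k)\dagger}_{\ell j}=\sum_jN^{(k)\dagger}_{jm}N^{(k)}_{j\ell}=\delta_{m\ell}$, with $M^{(k)}_i$ defined by $M^{(k)}_i=-\sum_jN^{(k)}_{ij}L^{(k)\dagger}_j$ (here $\dagger$ is the formal adjoint on $\mathcal D$, e.g. $(Xb^\dagger)^\dagger=X^*b$ for bounded $X$ on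 $\mathcal H'$). *)

theory Defs
  imports "HOL-Analysis.Analysis" "HOL-Library.Function_Algebras"
begin

class cvec = ab_group_add +
  fixes scaleC :: "complex \<Rightarrow> 'a \<Rightarrow> 'a"
  assumes scaleC_add_right: "scaleC a (x + y) = scaleC a x + scaleC a y"
    and scaleC_add_left: "scaleC (a + b) x = scaleC a x + scaleC b x"
    and scaleC_scaleC: "scaleC a (scaleC b x) = scaleC (a * b) x"
    and scaleC_one: "scaleC 1 x = x"

class cinner_space = cvec +
  fixes cinner :: "'a \<Rightarrow> 'a \<Rightarrow> complex"
  assumes cinner_commute: "cinner x y = cnj (cinner y x)"
    and cinner_add_right: "cinner x (y + z) = cinner x y + cinner x z"
    and cinner_scaleC_right: "cinner x (scaleC a y) = a * cinner x y"
    and cinner_Re_nonneg: "0 \<le> Re (cinner x x)"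
    and cinner_eq_zero_iff: "cinner x x = 0 \<longleftrightarrow> x = 0"

definition cnorm :: "'a::cinner_space \<Rightarrow> real" where
  "cnorm x = sqrt (Re (cinner x x))"

class chilbert = cinner_space +
  assumes cauchy_convergent:
    "(\<forall>e>0. \<exists>N. \<forall>m\<ge>N. \<forall>n\<ge>N. sqrt (Re (cinner (X m - X n) (X m - X n))) < e) \<Longrightarrow>
       \<exists>x. (\<lambda>n. sqrt (Re (cinner (X n - x) (X n - x)))) \<longlonglongrightarrow> 0"
    and separable: "\<exists>C. countable C \<and> (\<forall>x. \<forall>e>0. \<exists>d\<in>C. sqrt (Re (cinner (x - d) (x - d))) < e)"

definition bounded_cop :: "('a::cinner_space \<Rightarrow> 'a) \<Rightarrow> bool" where
  "bounded_cop A \<longleftrightarrow> (\<forall>x y. A (x + y) = A x + A y) \<and> (\<forall>a x. A (scaleC a x) = scaleC a (A x))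
     \<and> (\<exists>B. \<forall>x. cnorm (A x) \<le> B * cnorm x)"

definition is_adjoint :: "('a::cinner_space \<Rightarrow> 'a) \<Rightarrow> ('a \<Rightarrow> 'a) \<Rightarrow> bool" where
  "is_adjoint A As \<longleftrightarrow> (\<forall>x y. cinner (A x) y = cinner x (As y))"

text \<open>A vector u of H' \<otimes> l2(Z+) is represented by its components u i \<in> H' along phi_i;
  the elements of the algebraic tensor product D are exactly the finitely supported ones.\<close>
definition Dspace :: "(nat \<Rightarrow> 'a::cinner_space) set" where
  "Dspace = {u. finite {i. u i \<noteq> 0}}"

definition Hnorm :: "(nat \<Rightarrow> 'a::cinner_space) \<Rightarrow> real" where
  "Hnorm u = sqrt (\<Sum>i\<in>{i. u i \<noteq> 0}. (cnorm (u i))\<^sup>2)"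

text \<open>X \<otimes> 1 for an operator X on H'.\<close>
definition lift :: "('a::cinner_space \<Rightarrow> 'a) \<Rightarrow> (nat \<Rightarrow> 'a) \<Rightarrow> (nat \<Rightarrow> 'a)" where
  "lift A u = (\<lambda>i. A (u i))"

text \<open>1 \<otimes> b^dagger, b^dagger phi_i = sqrt(i+1) phi_(i+1).\<close>
definition bdag :: "(nat \<Rightarrow> 'a::cinner_space) \<Rightarrow> (nat \<Rightarrow> 'a)" where
  "bdag u = (\<lambda>i. if i = 0 then 0 else scaleC (complex_of_real (sqrt (real i))) (u (i - 1)))"

text \<open>1 \<otimes> b, b phi_i = sqrt i phi_(i-1).\<close>
definition bann :: "(nat \<Rightarrow> 'a::cinner_space) \<Rightarrow> (nat \<Rightarrow> 'a)" where
  "bann u = (\<lambda>i. scaleC (complex_of_real (sqrt (real (Suc i)))) (u (Suc i)))"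

text \<open>1 \<otimes> b^dagger b, b^dagger b phi_i = i phi_i.\<close>
definition numop :: "(nat \<Rightarrow> 'a::cinner_space) \<Rightarrow> (nat \<Rightarrow> 'a)" where
  "numop u = (\<lambda>i. scaleC (of_nat i) (u i))"

text \<open>K = E11 b^dagger b + E10 b^dagger + E01 b + E00.  Its formal adjoint is
  Kop E11* E01* E10* E00*.\<close>
definition Kop :: "('a::cinner_space \<Rightarrow> 'a) \<Rightarrow> ('a \<Rightarrow> 'a) \<Rightarrow> ('a \<Rightarrow> 'a) \<Rightarrow> ('a \<Rightarrow> 'a)
    \<Rightarrow> (nat \<Rightarrow> 'a) \<Rightarrow> (nat \<Rightarrow> 'a)" where
  "Kop E11 E10 E01 E00 u = lift E11 (numop u) + lift E10 (bdag u) + lift E01 (bann u) + lift E00 u"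

definition Lop :: "('a::cinner_space \<Rightarrow> 'a) \<Rightarrow> ('a \<Rightarrow> 'a) \<Rightarrow> (nat \<Rightarrow> 'a) \<Rightarrow> (nat \<Rightarrow> 'a)" where
  "Lop F G u = lift F (bdag u) + lift G u"

definition Ldagop :: "('a::cinner_space \<Rightarrow> 'a) \<Rightarrow> ('a \<Rightarrow> 'a) \<Rightarrow> (nat \<Rightarrow> 'a) \<Rightarrow> (nat \<Rightarrow> 'a)" where
  "Ldagop Fs Gs u = lift Fs (bann u) + lift Gs u"

datatype oplabel = OK | OKs | OL nat | OLs nat | OM nat | OMs nat | ON nat nat | ONs nat nat

fun valid_label :: "nat \<Rightarrow> oplabel \<Rightarrow> bool" where
  "valid_label n OK = True"
| "valid_label n OKs = True"
| "valid_label n (OL i) = (1 \<le> i \<and> i \<le> n)"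
| "valid_label n (OLs i) = (1 \<le> i \<and> i \<le> n)"
| "valid_label n (OM i) = (1 \<le> i \<and> i \<le> n)"
| "valid_label n (OMs i) = (1 \<le> i \<and> i \<le> n)"
| "valid_label n (ON i j) = (1 \<le> i \<and> i \<le> n \<and> 1 \<le> j \<and> j \<le> n)"
| "valid_label n (ONs i j) = (1 \<le> i \<and> i \<le> n \<and> 1 \<le> j \<and> j \<le> n)"

fun is_K_label :: "oplabel \<Rightarrow> bool" where
  "is_K_label OK = True"
| "is_K_label OKs = True"
| "is_K_label _ = False"

fun opval :: "nat \<Rightarrow> ('a::cinner_space \<Rightarrow> 'a) \<Rightarrow> ('a \<Rightarrow> 'a) \<Rightarrow> ('a \<Rightarrow> 'a) \<Rightarrow> ('a \<Rightarrow> 'a)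
    \<Rightarrow> ('a \<Rightarrow> 'a) \<Rightarrow> ('a \<Rightarrow> 'a) \<Rightarrow> ('a \<Rightarrow> 'a) \<Rightarrow> ('a \<Rightarrow> 'a)
    \<Rightarrow> (nat \<Rightarrow> 'a \<Rightarrow> 'a) \<Rightarrow> (nat \<Rightarrow> 'a \<Rightarrow> 'a) \<Rightarrow> (nat \<Rightarrow> 'a \<Rightarrow> 'a) \<Rightarrow> (nat \<Rightarrow> 'a \<Rightarrow> 'a)
    \<Rightarrow> (nat \<Rightarrow> nat \<Rightarrow> 'a \<Rightarrow> 'a) \<Rightarrow> (nat \<Rightarrow> nat \<Rightarrow> 'a \<Rightarrow> 'a)
    \<Rightarrow> oplabel \<Rightarrow> (nat \<Rightarrow> 'a) \<Rightarrow> (nat \<Rightarrow> 'a)" where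
  "opval n E11 E10 E01 E00 E11s E10s E01s E00s F G Fs Gs S Ss OK = Kop E11 E10 E01 E00"
| "opval n E11 E10 E01 E00 E11s E10s E01s E00s F G Fs Gs S Ss OKs = Kop E11s E01s E10s E00s"
| "opval n E11 E10 E01 E00 E11s E10s E01s E00s F G Fs Gs S Ss (OL i) = Lop (F i) (G i)"
| "opval n E11 E10 E01 E00 E11s E10s E01s E00s F G Fs Gs S Ss (OLs i) = Ldagop (Fs i) (Gs i)"
| "opval n E11 E10 E01 E00 E11s E10s E01s E00s F G Fs Gs S Ss (OM i) =
     (\<lambda>u. - (\<Sum>j\<in>{1..n}. lift (S i j) (Ldagop (Fs j) (Gs j) u)))"
| "opval n E11 E10 E01 E00 E11s E10s E01s E00s F G Fs Gs S Ss (OMs i) =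
     (\<lambda>u. - (\<Sum>j\<in>{1..n}. Lop (F j) (G j) (lift (Ss i j) u)))"
| "opval n E11 E10 E01 E00 E11s E10s E01s E00s F G Fs Gs S Ss (ON i j) = lift (S i j)"
| "opval n E11 E10 E01 E00 E11s E10s E01s E00s F G Fs Gs S Ss (ONs i j) = lift (Ss i j)"

end

theory Submission
  imports Defs
begin


lemma cinner_add_left: "cinner (x+y) (z::'a::cinner_space) = cinner x z + cinner y z"
  by (metis cinner_commute cinner_add_right complex_cnj_add)
lemma cinner_zero_right[simp]: "cinner (x::'a::cinner_space) 0 = 0"
  using cinner_add_right[of x 0 0] by simp
lemma cinner_zero_left[simp]: "cinner 0 (x::'a::cinner_space) = 0"
  using cinner_add_left[of 0 0 x] by simp
lemma cinner_minus_right: "cinner (x::'a::cinner_space) (-y) = - cinner x y"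
  using cinner_add_right[of x y "-y"] by (simp add: eq_neg_iff_add_eq_0 add.commute)
lemma cinner_minus_left: "cinner (-x) (y::'a::cinner_space) = - cinner x y"
  using cinner_add_left[of x "-x" y] by (simp add: eq_neg_iff_add_eq_0 add.commute)
lemma cinner_scaleC_left: "cinner (scaleC a x) (y::'a::cinner_space) = cnj a * cinner x y"
  by (metis cinner_commute cinner_scaleC_right complex_cnj_mult complex_cnj_cnj)
lemma Re_cinner_sym: "Re (cinner x (y::'a::cinner_space)) = Re (cinner y x)"
  by (subst cinner_commute) simp
lemma cinner_diff_left: "cinner (x - y) (z::'a::cinner_space) = cinner x z - cinner y z"
  using cinner_add_left[of x "-y" z] by (simp add: cinner_minus_left)
lemma cinner_diff_right: "cinner z (x - (y::'a::cinner_space)) = cinner z x - cinner z y"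
  using cinner_add_right[of z x "-y"] by (simp add: cinner_minus_right)
lemma cnorm_sq: "(cnorm (x::'a::cinner_space))^2 = Re (cinner x x)"
  unfolding cnorm_def using cinner_Re_nonneg[of x] by simp
lemma cnorm_nonneg: "0 \<le> cnorm x" unfolding cnorm_def using cinner_Re_nonneg[of x] by simp
lemma cnorm_zero[simp]: "cnorm (0::'a::cinner_space) = 0" unfolding cnorm_def by simp
lemma cnorm_eq_0: "cnorm (x::'a::cinner_space) = 0 \<longleftrightarrow> x = 0"
proof
  assume "cnorm x = 0"
  then have r: "Re (cinner x x) = 0" using cinner_Re_nonneg[of x] unfolding cnorm_def by simp
  have "Im (cinner x x) = - Im (cinner x x)" by (subst cinner_commute) simp
  then have "Im (cinner x x) = 0" by simp
  with r have "cinner x x = 0" by (simp add: complex_eqI)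
  then show "x = 0" using cinner_eq_zero_iff by auto
qed simp

lemma cnorm_add_sq: "(cnorm ((x::'a::cinner_space) + y))^2 \<le> 2 * (cnorm x)^2 + 2 * (cnorm y)^2"
proof -
  have "Re (cinner (x + - y) (x + - y)) \<ge> 0" by (rule cinner_Re_nonneg)
  then show ?thesis unfolding cnorm_sq
    by (simp add: cinner_add_left cinner_add_right cinner_diff_left cinner_diff_right Re_cinner_sym[of y x])
qed

lemma cnorm_minus[simp]: "cnorm (-(x::'a::cinner_space)) = cnorm x"
  unfolding cnorm_def by (simp add: cinner_minus_left cinner_minus_right)

lemma cnorm_scale_sq: "(cnorm (scaleC (complex_of_real r) (x::'a::cinner_space)))^2 = r^2 * (cnorm x)^2"
  unfolding cnorm_sq by (simp add: cinner_scaleC_left cinner_scaleC_right power2_eq_square)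

lemma key_ineq: "2 * t * Re (cinner a (y::'a::cinner_space)) \<le> t^2 * (cnorm a)^2 + (cnorm y)^2"
proof -
  have "Re (cinner (scaleC (complex_of_real t) a + - y) (scaleC (complex_of_real t) a + - y)) \<ge> 0"
    by (rule cinner_Re_nonneg)
  then show ?thesis unfolding cnorm_sq
    by (simp add: cinner_add_left cinner_add_right cinner_diff_left cinner_diff_right
        cinner_scaleC_left cinner_scaleC_right Re_cinner_sym[of y a] power2_eq_square algebra_simps)
qed

definition bnd :: "('a::cinner_space \<Rightarrow> 'a) \<Rightarrow> real \<Rightarrow> bool" where
  "bnd A B \<longleftrightarrow> 1 \<le> B \<and> (\<forall>x. cnorm (A x) \<le> B * cnorm x)"

lemma bnd_mono: "bnd A B \<Longrightarrow> B \<le> B' \<Longrightarrow> bnd A B'"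
  unfolding bnd_def by (meson cnorm_nonneg mult_right_mono order_trans)

lemma bounded_bnd: "bounded_cop A \<Longrightarrow> \<exists>B. bnd A B"
proof -
  assume "bounded_cop A"
  then obtain B where B: "\<forall>x. cnorm (A x) \<le> B * cnorm x" unfolding bounded_cop_def by blast
  have "bnd A (max B 1)" unfolding bnd_def
    using B by (meson cnorm_nonneg max.cobounded1 max.cobounded2 mult_right_mono order_trans)
  then show ?thesis by blast
qed

lemma adjoint_bnd: assumes "bnd A B" "is_adjoint A As" shows "bnd As B"
  unfolding bnd_def
proof (intro conjI allI)
  show "1 \<le> B" using assms unfolding bnd_def by simp
  fix y
  define sv where "sv = cnorm (As y)"
  define a where "a = A (As y)"
  have B1: "1 \<le> B" using assms unfolding bnd_def by simp
  have as: "cnorm a \<le> B * sv" using assms unfolding bnd_def a_def sv_def by simp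
  have as2: "(cnorm a)^2 \<le> (B * sv)^2" by (rule power_mono[OF as cnorm_nonneg])
  have e1: "sv^2 = Re (cinner a y)" unfolding sv_def a_def cnorm_sq
    using assms(2) unfolding is_adjoint_def by simp
  define t where "t = 1 / (B*B)"
  have e2: "2 * t * Re (cinner a y) \<le> t^2 * (cnorm a)^2 + (cnorm y)^2"
    by (rule key_ineq)
  have "t^2 * (cnorm a)^2 \<le> t^2 * (B * sv)^2" by (rule mult_left_mono[OF as2]) simp
  then have "2 * t * sv^2 \<le> t^2 * (B * sv)^2 + (cnorm y)^2" using e2 unfolding e1[symmetric] by linarith
  moreover have "t^2 * (B * sv)^2 = sv^2 / B^2" "2 * t * sv^2 = 2 * (sv^2/B^2)" using B1 unfolding t_def by (simp_all add: field_simps power2_eq_square)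
  ultimately have "sv^2 / B^2 \<le> (cnorm y)^2" by simp
  then have "sv^2 \<le> (B * cnorm y)^2" using B1 by (simp add: field_simps power_mult_distrib)
  then show "cnorm (As y) \<le> B * cnorm y" unfolding sv_def
    by (rule power2_le_imp_le) (use B1 cnorm_nonneg[of y] in simp)
qed

lemma bnd_common: "finite I \<Longrightarrow> \<forall>i\<in>I. \<exists>B. bnd (f i) B \<Longrightarrow> \<exists>B\<ge>1. \<forall>i\<in>I. bnd (f i) B"
proof (induction I rule: finite_induct)
  case empty then show ?case by auto
next
  case (insert x F)
  then obtain B where B: "B\<ge>1" "\<forall>i\<in>F. bnd (f i) B" by auto
  obtain B' where B': "bnd (f x) B'" using insert by auto
  show ?case using B B' bnd_mono
    by (metis insert_iff max.cobounded1 max.cobounded2 order_trans)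
qed



definition supp_le :: "nat \<Rightarrow> (nat \<Rightarrow> 'a::cinner_space) \<Rightarrow> bool" where
  "supp_le q u \<longleftrightarrow> (\<forall>i\<ge>q. u i = 0)"

definition N2 :: "nat \<Rightarrow> (nat \<Rightarrow> 'a::cinner_space) \<Rightarrow> real" where
  "N2 q u = (\<Sum>i<q. (cnorm (u i))^2)"

definition opb :: "((nat \<Rightarrow> 'a::cinner_space) \<Rightarrow> (nat \<Rightarrow> 'a)) \<Rightarrow> real \<Rightarrow> nat \<Rightarrow> bool" where
  "opb X D e \<longleftrightarrow> (\<forall>q v. supp_le q v \<longrightarrow> supp_le (Suc q) (X v) \<and>
      N2 (Suc q) (X v) \<le> D * (real (Suc q))^e * N2 q v)"

lemma N2_nonneg: "0 \<le> N2 q u" unfolding N2_def by (simp add: sum_nonneg)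

lemma supp_le_Suc: "supp_le q v \<Longrightarrow> supp_le (Suc q) v" unfolding supp_le_def by auto

lemma N2_Suc: "supp_le q v \<Longrightarrow> N2 (Suc q) v = N2 q v" unfolding supp_le_def N2_def by simp

lemma Hnorm_N2: assumes "supp_le q v" shows "Hnorm v = sqrt (N2 q v)"
proof -
  have "{i. v i \<noteq> 0} \<subseteq> {..<q}" using assms unfolding supp_le_def by (metis (mono_tags) lessThan_iff mem_Collect_eq not_le subsetI)
  then have "(\<Sum>i\<in>{i. v i \<noteq> 0}. (cnorm (v i))^2) = (\<Sum>i<q. (cnorm (v i))^2)"
    by (intro sum.mono_neutral_left) auto
  then show ?thesis unfolding Hnorm_def N2_def by simp
qed

lemma bnd_zero: "bnd A B \<Longrightarrow> A 0 = 0"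
  unfolding bnd_def using cnorm_eq_0 cnorm_nonneg
  by (metis cnorm_zero mult_zero_right order_antisym)

lemma lift_bound: assumes "bnd A B" "supp_le q v"
  shows "supp_le q (lift A v) \<and> N2 q (lift A v) \<le> B^2 * N2 q v"
proof
  show "supp_le q (lift A v)" using assms bnd_zero unfolding supp_le_def lift_def by auto
  have "\<And>i. (cnorm (A (v i)))^2 \<le> B^2 * (cnorm (v i))^2"
  proof -
    fix i have "cnorm (A (v i)) \<le> B * cnorm (v i)" using assms unfolding bnd_def by auto
    then have "(cnorm (A (v i)))^2 \<le> (B * cnorm (v i))^2" by (rule power_mono) (rule cnorm_nonneg)
    then show "(cnorm (A (v i)))^2 \<le> B^2 * (cnorm (v i))^2" by (simp add: power_mult_distrib)
  qed
  then show "N2 q (lift A v) \<le> B^2 * N2 q v" unfolding N2_def lift_def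
    by (simp add: sum_distrib_left sum_mono)
qed

lemma N2_add: "N2 q (u + v) \<le> 2 * N2 q u + 2 * N2 q v"
  unfolding N2_def by (simp add: sum_distrib_left sum.distrib[symmetric] sum_mono cnorm_add_sq)

lemma supp_le_add: "supp_le q u \<Longrightarrow> supp_le q v \<Longrightarrow> supp_le q (u + v)"
  unfolding supp_le_def by simp

lemma N2_neg[simp]: "N2 q (- u) = N2 q u" unfolding N2_def by simp
lemma supp_le_neg: "supp_le q u \<Longrightarrow> supp_le q (- u)" unfolding supp_le_def by simp

lemma sum_fun_app: "(\<Sum>j\<in>J. f j) (i::nat) = (\<Sum>j\<in>J. (f j i :: 'a::comm_monoid_add))"
  by (induction J rule: infinite_finite_induct) auto

lemma supp_le_sum: "(\<And>j. j \<in> J \<Longrightarrow> supp_le q (f j)) \<Longrightarrow> supp_le q (\<Sum>j\<in>J. f j)"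
  unfolding supp_le_def sum_fun_app by auto

lemma N2_sum: "finite J \<Longrightarrow> N2 q (\<Sum>j\<in>J. f j) \<le> 2 ^ card J * (\<Sum>j\<in>J. N2 q (f j))"
proof (induction J rule: finite_induct)
  case empty then show ?case unfolding N2_def by simp
next
  case (insert x F)
  have "N2 q (\<Sum>j\<in>insert x F. f j) = N2 q (f x + (\<Sum>j\<in>F. f j))" using insert by simp
  also have "\<dots> \<le> 2 * N2 q (f x) + 2 * N2 q (\<Sum>j\<in>F. f j)" by (rule N2_add)
  also have "\<dots> \<le> 2 * N2 q (f x) + 2 * (2 ^ card F * (\<Sum>j\<in>F. N2 q (f j)))" using insert by simp
  also have "\<dots> \<le> 2 ^ card (insert x F) * (N2 q (f x) + (\<Sum>j\<in>F. N2 q (f j)))"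
  proof -
    have "(1::real) \<le> 2 ^ card F" by simp
    then have "2 \<le> (2::real) ^ Suc (card F)" by simp
    then have "2 * N2 q (f x) \<le> 2 ^ Suc (card F) * N2 q (f x)" by (rule mult_right_mono) (rule N2_nonneg)
    then show ?thesis using insert by (simp add: algebra_simps)
  qed
  also have "\<dots> = 2 ^ card (insert x F) * (\<Sum>j\<in>insert x F. N2 q (f j))" using insert by simp
  finally show ?case .
qed

lemma opb_mono: "opb X D e \<Longrightarrow> 0 \<le> D \<Longrightarrow> D \<le> D' \<Longrightarrow> e \<le> e' \<Longrightarrow> opb X D' e'"
  unfolding opb_def
proof (intro allI impI conjI)
  fix q v assume h: "\<forall>q v. supp_le q v \<longrightarrow> supp_le (Suc q) (X v) \<and> N2 (Suc q) (X v) \<le> D * real (Suc q) ^ e * N2 q v"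
    and d0: "0 \<le> D" and d: "D \<le> D'" and e: "e \<le> e'" and s: "supp_le q (v :: nat \<Rightarrow> 'a)"
  show "supp_le (Suc q) (X v)" using h s by blast
  have p: "(real (Suc q)) ^ e \<le> real (Suc q) ^ e'" using e by (intro power_increasing) auto
  have "D * (real (Suc q)) ^ e \<le> D' * real (Suc q) ^ e'"
    using p d d0 by (intro mult_mono) auto
  then have "D * (real (Suc q)) ^ e * N2 q v \<le> D' * real (Suc q) ^ e' * N2 q v"
    by (rule mult_right_mono) (rule N2_nonneg)
  then show "N2 (Suc q) (X v) \<le> D' * real (Suc q) ^ e' * N2 q v" using h s by force
qed



lemma scaleC_zero_right[simp]: "scaleC a (0::'a::cvec) = 0"
  using scaleC_add_right[of a "0::'a" 0] by simp

lemma opb_add: assumes "opb X D1 e" "opb Y D2 e"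
  shows "opb (\<lambda>v. X v + Y v) (2*D1+2*D2) e"
  unfolding opb_def
proof (intro allI impI conjI)
  fix q and v :: "nat \<Rightarrow> 'a::cinner_space" assume s: "supp_le q v"
  have x: "supp_le (Suc q) (X v)" "N2 (Suc q) (X v) \<le> D1 * real (Suc q) ^ e * N2 q v"
    using assms(1) s unfolding opb_def by auto
  have y: "supp_le (Suc q) (Y v)" "N2 (Suc q) (Y v) \<le> D2 * real (Suc q) ^ e * N2 q v"
    using assms(2) s unfolding opb_def by auto
  show "supp_le (Suc q) (X v + Y v)" by (rule supp_le_add[OF x(1) y(1)])
  have "N2 (Suc q) (X v + Y v) \<le> 2 * N2 (Suc q) (X v) + 2 * N2 (Suc q) (Y v)" by (rule N2_add)
  also have "\<dots> \<le> (2*D1+2*D2) * real (Suc q) ^ e * N2 q v" using x y by (simp add: algebra_simps)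
  finally show "N2 (Suc q) (X v + Y v) \<le> (2*D1+2*D2) * real (Suc q) ^ e * N2 q v" .
qed

lemma opb_neg: "opb X D e \<Longrightarrow> opb (\<lambda>v. - X v) D e"
  unfolding opb_def using supp_le_neg by auto

lemma opb_sum: fixes D :: real assumes "finite J" "\<And>j. j \<in> J \<Longrightarrow> opb (X j) D e"
  shows "opb (\<lambda>v. \<Sum>j\<in>J. X j v) (2 ^ card J * card J * D) e"
  unfolding opb_def
proof (intro allI impI conjI)
  fix q and v :: "nat \<Rightarrow> 'b::cinner_space" assume s: "supp_le q v"
  have x: "\<And>j. j \<in> J \<Longrightarrow> supp_le (Suc q) (X j v)"
       "\<And>j. j \<in> J \<Longrightarrow> N2 (Suc q) (X j v) \<le> D * real (Suc q) ^ e * N2 q v"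
    using assms(2) s unfolding opb_def by auto
  show "supp_le (Suc q) (\<Sum>j\<in>J. X j v)" using x(1) by (rule supp_le_sum)
  have "N2 (Suc q) (\<Sum>j\<in>J. X j v) \<le> 2 ^ card J * (\<Sum>j\<in>J. N2 (Suc q) (X j v))"
    using assms(1) by (rule N2_sum)
  also have "\<dots> \<le> 2 ^ card J * (\<Sum>j\<in>J. D * real (Suc q) ^ e * N2 q v)"
    using x by (intro mult_left_mono sum_mono) auto
  also have "\<dots> = (2 ^ card J * card J * D) * real (Suc q) ^ e * N2 q v" by simp
  finally show "N2 (Suc q) (\<Sum>j\<in>J. X j v) \<le> (2 ^ card J * card J * D) * real (Suc q) ^ e * N2 q v" .
qed

lemma opb_lift_left: assumes "bnd A B" "opb X D e"
  shows "opb (\<lambda>v. lift A (X v)) (B^2 * D) e"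
  unfolding opb_def
proof (intro allI impI conjI)
  fix q and v :: "nat \<Rightarrow> 'a::cinner_space" assume s: "supp_le q v"
  have x: "supp_le (Suc q) (X v)" "N2 (Suc q) (X v) \<le> D * real (Suc q) ^ e * N2 q v"
    using assms(2) s unfolding opb_def by auto
  show "supp_le (Suc q) (lift A (X v))" using lift_bound[OF assms(1) x(1)] by simp
  have "N2 (Suc q) (lift A (X v)) \<le> B^2 * N2 (Suc q) (X v)" using lift_bound[OF assms(1) x(1)] by simp
  also have "\<dots> \<le> B^2 * (D * real (Suc q) ^ e * N2 q v)" using x(2) by (simp add: mult_left_mono)
  finally show "N2 (Suc q) (lift A (X v)) \<le> (B^2 * D) * real (Suc q) ^ e * N2 q v" by (simp add: algebra_simps)
qed

lemma opb_lift_right: assumes "bnd A B" "opb X D e" "0 \<le> D"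
  shows "opb (\<lambda>v. X (lift A v)) (D * B^2) e"
  unfolding opb_def
proof (intro allI impI conjI)
  fix q and v :: "nat \<Rightarrow> 'a::cinner_space" assume s: "supp_le q v"
  have l: "supp_le q (lift A v)" "N2 q (lift A v) \<le> B^2 * N2 q v" using lift_bound[OF assms(1) s] by auto
  have x: "supp_le (Suc q) (X (lift A v))" "N2 (Suc q) (X (lift A v)) \<le> D * real (Suc q) ^ e * N2 q (lift A v)"
    using assms(2) l(1) unfolding opb_def by auto
  show "supp_le (Suc q) (X (lift A v))" by (rule x(1))
  have "D * real (Suc q) ^ e * N2 q (lift A v) \<le> D * real (Suc q) ^ e * (B^2 * N2 q v)"
    using l(2) assms(3) by (intro mult_left_mono) auto
  with x(2) show "N2 (Suc q) (X (lift A v)) \<le> (D * B^2) * real (Suc q) ^ e * N2 q v" by (simp add: algebra_simps)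
qed

lemma opb_lift: assumes "bnd A B" shows "opb (lift A) (B^2) e"
  unfolding opb_def
proof (intro allI impI conjI)
  fix q and v :: "nat \<Rightarrow> 'a::cinner_space" assume s: "supp_le q v"
  have l: "supp_le q (lift A v)" "N2 q (lift A v) \<le> B^2 * N2 q v" using lift_bound[OF assms(1) s] by auto
  show "supp_le (Suc q) (lift A v)" using l(1) by (rule supp_le_Suc)
  have "(1::real) \<le> real (Suc q) ^ e" by simp
  then have "1 * N2 q v \<le> real (Suc q) ^ e * N2 q v"
    using N2_nonneg[of q v] by (intro mult_right_mono) auto
  then have "B^2 * N2 q v \<le> B^2 * (real (Suc q) ^ e * N2 q v)"
    by (intro mult_left_mono) auto
  then have "B^2 * N2 q v \<le> B^2 * real (Suc q) ^ e * N2 q v" by (simp add: mult.assoc)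
  then show "N2 (Suc q) (lift A v) \<le> B^2 * real (Suc q) ^ e * N2 q v" using l N2_Suc[OF l(1)] by simp
qed

lemma opb_bdag: "opb bdag 1 1"
  unfolding opb_def
proof (intro allI impI conjI)
  fix q and v :: "nat \<Rightarrow> 'a::cinner_space" assume s: "supp_le q v"
  show "supp_le (Suc q) (bdag v)" using s unfolding supp_le_def bdag_def by auto
  have "N2 (Suc q) (bdag v) = (\<Sum>i<q. (cnorm (bdag v (Suc i)))^2)"
    unfolding N2_def by (subst sum.lessThan_Suc_shift) (simp add: bdag_def)
  also have "\<dots> = (\<Sum>i<q. real (Suc i) * (cnorm (v i))^2)"
    unfolding bdag_def by (simp add: cnorm_scale_sq del: of_nat_Suc)
  also have "\<dots> \<le> (\<Sum>i<q. real (Suc q) * (cnorm (v i))^2)"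
    by (intro sum_mono mult_right_mono) auto
  also have "\<dots> = 1 * real (Suc q) ^ 1 * N2 q v" unfolding N2_def by (simp add: sum_distrib_left)
  finally show "N2 (Suc q) (bdag v) \<le> 1 * real (Suc q) ^ 1 * N2 q v" .
qed

lemma opb_bann: "opb bann 1 1"
  unfolding opb_def
proof (intro allI impI conjI)
  fix q and v :: "nat \<Rightarrow> 'a::cinner_space" assume s: "supp_le q v"
  show "supp_le (Suc q) (bann v)" using s unfolding supp_le_def bann_def by auto
  have "N2 (Suc q) (bann v) = (\<Sum>i<Suc q. real (Suc i) * (cnorm (v (Suc i)))^2)"
    unfolding N2_def bann_def by (simp add: cnorm_scale_sq del: of_nat_Suc)
  also have "\<dots> \<le> (\<Sum>i<Suc q. real (Suc q) * (cnorm (v (Suc i)))^2)"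
    by (intro sum_mono mult_right_mono) auto
  also have "\<dots> = real (Suc q) * (\<Sum>i<Suc q. (cnorm (v (Suc i)))^2)" by (simp add: sum_distrib_left del: sum.lessThan_Suc)
  also have "\<dots> \<le> real (Suc q) * N2 (Suc (Suc q)) v"
  proof -
    have "(\<Sum>i<Suc q. (cnorm (v (Suc i)))^2) \<le> (cnorm (v 0))^2 + (\<Sum>i<Suc q. (cnorm (v (Suc i)))^2)" by simp
    also have "\<dots> = N2 (Suc (Suc q)) v" unfolding N2_def by (subst sum.lessThan_Suc_shift) simp
    finally show ?thesis by (intro mult_left_mono) auto
  qed
  also have "\<dots> = 1 * real (Suc q) ^ 1 * N2 q v" using N2_Suc[OF supp_le_Suc[OF s]] N2_Suc[OF s] by simp
  finally show "N2 (Suc q) (bann v) \<le> 1 * real (Suc q) ^ 1 * N2 q v" .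
qed

lemma opb_numop: "opb numop 1 2"
  unfolding opb_def
proof (intro allI impI conjI)
  fix q and v :: "nat \<Rightarrow> 'a::cinner_space" assume s: "supp_le q v"
  show "supp_le (Suc q) (numop v)" using s unfolding supp_le_def numop_def by auto
  have e: "\<And>i. (of_nat i :: complex) = complex_of_real (real i)" by simp
  have "N2 (Suc q) (numop v) = (\<Sum>i<Suc q. (real i)^2 * (cnorm (v i))^2)"
    unfolding N2_def numop_def e cnorm_scale_sq ..
  also have "\<dots> \<le> (\<Sum>i<Suc q. (real (Suc q))^2 * (cnorm (v i))^2)"
    by (intro sum_mono mult_right_mono power_mono) auto
  also have "\<dots> = 1 * real (Suc q) ^ 2 * N2 (Suc q) v" unfolding N2_def by (simp add: sum_distrib_left del: sum.lessThan_Suc)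
  finally show "N2 (Suc q) (numop v) \<le> 1 * real (Suc q) ^ 2 * N2 q v" using N2_Suc[OF s] by simp
qed



lemma fact_split: "fact (a+b) \<le> 2^(a+b) * fact a * (fact b :: nat)"
proof -
  have "fact a * fact b * ((a+b) choose a) = (fact (a+b) :: nat)"
    using binomial_fact_lemma[of a "a+b"] by simp
  moreover have "((a+b) choose a) \<le> 2^(a+b)" by (rule binomial_le_pow2)
  ultimately show ?thesis by (metis mult.commute mult_le_mono2 mult.assoc)
qed

lemma fact_step1: "real (Suc a) * fact (a+m) \<le> fact (Suc a + m)"
proof -
  have "Suc a * fact (a+m) \<le> (fact (Suc a + m) :: nat)" by simp
  then have "real (Suc a * fact (a+m)) \<le> real (fact (Suc a + m))" by (rule of_nat_mono)
  then show ?thesis by (simp only: of_nat_mult of_nat_fact)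
qed

lemma fact_step2: "real (Suc a) ^ 2 * fact (a+m) \<le> fact (Suc a + Suc m)"
proof -
  have "Suc a * Suc a \<le> Suc (Suc (a+m)) * Suc (a+m)" by (intro mult_le_mono) auto
  then have "Suc a * Suc a * fact (a+m) \<le> Suc (Suc (a+m)) * Suc (a+m) * (fact (a+m) :: nat)" by (rule mult_le_mono1)
  also have "\<dots> = fact (Suc a + Suc m)" by (simp only: add_Suc_right add_Suc fact_Suc of_nat_id mult.assoc)
  finally have "Suc a * Suc a * fact (a+m) \<le> (fact (Suc a + Suc m) :: nat)" .
  then have "real (Suc a * Suc a * fact (a+m)) \<le> real (fact (Suc a + Suc m))" by (rule of_nat_mono)
  then show ?thesis unfolding power2_eq_square by (simp only: of_nat_mult of_nat_fact)
qed

lemma fold_bound: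
  fixes f :: "'l \<Rightarrow> (nat \<Rightarrow> 'a::cinner_space) \<Rightarrow> (nat \<Rightarrow> 'a)" and D :: real
  assumes "\<forall>x\<in>set xs. opb (f x) D (if K x then 2 else 1)" "1 \<le> D" "supp_le N u"
  shows "supp_le (N + length xs) (foldr f xs u) \<and>
    N2 (N + length xs) (foldr f xs u) \<le> D ^ length xs * fact (N + length xs + length (filter K xs)) * N2 N u"
  using assms(1)
proof (induction xs)
  case Nil
  have "1 * N2 N u \<le> fact N * N2 N u" by (intro mult_right_mono) (auto simp: N2_nonneg)
  then show ?case using assms(3) by simp
next
  case (Cons x xs)
  define w where "w = foldr f xs u"
  define k where "k = length xs"
  define m where "m = length (filter K xs)"
  have IH: "supp_le (N + k) w" "N2 (N + k) w \<le> D ^ k * fact (N + k + m) * N2 N u"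
    using Cons unfolding w_def k_def m_def by auto
  have ox: "opb (f x) D (if K x then 2 else 1)" using Cons by simp
  have h: "supp_le (Suc (N+k)) (f x w)" "N2 (Suc (N+k)) (f x w) \<le> D * real (Suc (N+k)) ^ (if K x then 2 else 1) * N2 (N+k) w"
    using ox[unfolded opb_def, rule_format, OF IH(1)] by auto
  have D0: "0 \<le> D" using assms(2) by simp
  have "N2 (Suc (N+k)) (f x w) \<le> D * real (Suc (N+k)) ^ (if K x then 2 else 1) * (D ^ k * fact (N + k + m) * N2 N u)"
  proof -
    have "D * real (Suc (N+k)) ^ (if K x then 2 else 1) * N2 (N+k) w \<le> D * real (Suc (N+k)) ^ (if K x then 2 else 1) * (D ^ k * fact (N + k + m) * N2 N u)"
      by (rule mult_left_mono[OF IH(2)]) (use D0 in simp)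
    then show ?thesis using h(2) by linarith
  qed
  also have "\<dots> = D ^ Suc k * (real (Suc (N+k)) ^ (if K x then 2 else 1) * fact (N + k + m)) * N2 N u"
    by (simp add: algebra_simps)
  also have "\<dots> \<le> D ^ Suc k * fact (N + Suc k + length (filter K (x # xs))) * N2 N u"
  proof -
    have "real (Suc (N+k)) ^ (if K x then 2 else 1) * fact (N + k + m) \<le> fact (N + Suc k + length (filter K (x # xs)))"
    proof (cases "K x")
      case True then show ?thesis using fact_step2[of "N+k" m] unfolding m_def by simp
    next
      case False then show ?thesis using fact_step1[of "N+k" m] unfolding m_def by simp
    qed
    then show ?thesis using D0 N2_nonneg[of N u] by (intro mult_right_mono mult_left_mono) auto
  qed
  finally show ?case using h(1) unfolding w_def k_def by simp
qed



lemma opb_Lop: assumes "bnd F B" "bnd G B" shows "opb (Lop F G) (4*B^2) 1"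
proof -
  have e: "Lop F G = (\<lambda>u. lift F (bdag u) + lift G u)" by (rule ext) (simp add: Lop_def)
  have "opb (\<lambda>u. lift F (bdag u) + lift G u) (2*(B^2*1) + 2*B^2) 1"
    by (rule opb_add[OF opb_lift_left[OF assms(1) opb_bdag] opb_lift[OF assms(2)]])
  then show ?thesis unfolding e by (rule opb_mono) auto
qed

lemma opb_Ldag: assumes "bnd F B" "bnd G B" shows "opb (Ldagop F G) (4*B^2) 1"
proof -
  have e: "Ldagop F G = (\<lambda>u. lift F (bann u) + lift G u)" by (rule ext) (simp add: Ldagop_def)
  have "opb (\<lambda>u. lift F (bann u) + lift G u) (2*(B^2*1) + 2*B^2) 1"
    by (rule opb_add[OF opb_lift_left[OF assms(1) opb_bann] opb_lift[OF assms(2)]])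
  then show ?thesis unfolding e by (rule opb_mono) auto
qed

lemma opb_Kop: assumes "bnd A B" "bnd C B" "bnd E B" "bnd H B"
  shows "opb (Kop A C E H) (22*B^2) 2"
proof -
  have e: "Kop A C E H = (\<lambda>u. lift A (numop u) + lift C (bdag u) + lift E (bann u) + lift H u)"
    by (rule ext) (simp add: Kop_def)
  have b2: "opb bdag 1 2" by (rule opb_mono[OF opb_bdag]) auto
  have a2: "opb bann 1 2" by (rule opb_mono[OF opb_bann]) auto
  have "opb (\<lambda>u. lift A (numop u) + lift C (bdag u) + lift E (bann u) + lift H u)
     (2*(2*(2*(B^2*1) + 2*(B^2*1)) + 2*(B^2*1)) + 2*B^2) 2"
    by (rule opb_add[OF opb_add[OF opb_add[OF opb_lift_left[OF assms(1) opb_numop]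
          opb_lift_left[OF assms(2) b2]] opb_lift_left[OF assms(3) a2]] opb_lift[OF assms(4)]])
  then show ?thesis unfolding e by (rule opb_mono) auto
qed

lemma opb_M: fixes B :: real
  assumes "\<And>j. j \<in> {1..n} \<Longrightarrow> bnd (S j) B \<and> bnd (Fs j) B \<and> bnd (Gs j) B"
  shows "opb (\<lambda>u. - (\<Sum>j\<in>{1..n}. lift (S j) (Ldagop (Fs j) (Gs j) u))) ((2::real)^n * real n * (B^2 * (4*B^2))) 1"
proof -
  have "opb (\<lambda>u. \<Sum>j\<in>{1..n}. lift (S j) (Ldagop (Fs j) (Gs j) u)) (2 ^ card {1..n} * card {1..n} * (B^2 * (4*B^2))) 1"
  proof (rule opb_sum)
    fix j assume "j \<in> {1..n}"
    then have h: "bnd (S j) B" "bnd (Fs j) B" "bnd (Gs j) B" using assms by auto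
    show "opb (\<lambda>u. lift (S j) (Ldagop (Fs j) (Gs j) u)) (B^2 * (4*B^2)) 1"
      by (rule opb_lift_left[OF h(1) opb_Ldag[OF h(2,3)]])
  qed simp
  then show ?thesis by (auto intro: opb_neg)
qed

lemma opb_Ms: fixes B :: real
  assumes "\<And>j. j \<in> {1..n} \<Longrightarrow> bnd (Ss j) B \<and> bnd (F j) B \<and> bnd (G j) B"
  shows "opb (\<lambda>u. - (\<Sum>j\<in>{1..n}. Lop (F j) (G j) (lift (Ss j) u))) ((2::real)^n * real n * (4*B^2 * B^2)) 1"
proof -
  have "opb (\<lambda>u. \<Sum>j\<in>{1..n}. Lop (F j) (G j) (lift (Ss j) u)) (2 ^ card {1..n} * card {1..n} * (4*B^2 * B^2)) 1"
  proof (rule opb_sum)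
    fix j assume "j \<in> {1..n}"
    then have h: "bnd (Ss j) B" "bnd (F j) B" "bnd (G j) B" using assms by auto
    show "opb (\<lambda>u. Lop (F j) (G j) (lift (Ss j) u)) (4*B^2 * B^2) 1"
      by (rule opb_lift_right[OF h(1) opb_Lop[OF h(2,3)]]) simp
  qed simp
  then show ?thesis by (auto intro: opb_neg)
qed



lemma final_ineq:
  fixes D0 X :: real and N k m :: nat
  assumes "1 \<le> D0" "0 \<le> X" "m \<le> k"
  shows "D0 ^ k * fact (N + k + m) * X \<le> (4*D0)^k * (2^N * fact N * X) * fact (k+m)"
proof -
  have f: "(fact (N + (k+m)) :: real) \<le> 2^(N+(k+m)) * fact N * fact (k+m)"
  proof -
    have "real (fact (N + (k+m))) \<le> real (2^(N+(k+m)) * fact N * fact (k+m))"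
      by (rule of_nat_mono[OF fact_split])
    then show ?thesis by (simp only: of_nat_mult of_nat_fact of_nat_power of_nat_numeral)
  qed
  have p: "(2::real)^(k+m) \<le> 4^k"
  proof -
    have "(2::real)^(k+m) \<le> 2^(k+k)" using assms(3) by (intro power_increasing) auto
    also have "\<dots> = 4^k" by (simp add: power_add[symmetric] mult_2[symmetric] power_mult)
    finally show ?thesis .
  qed
  have "fact (N + k + m) \<le> (2::real)^N * 2^(k+m) * fact N * fact (k+m)"
    using f by (simp add: power_add add.assoc)
  also have "\<dots> \<le> 2^N * 4^k * fact N * fact (k+m)"
    using p by (intro mult_right_mono mult_left_mono) auto
  finally have g: "fact (N + k + m) \<le> (2::real)^N * 4^k * fact N * fact (k+m)" .
  have "D0 ^ k * fact (N + k + m) * X \<le> D0 ^ k * (2^N * 4^k * fact N * fact (k+m)) * X"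
    using g assms by (intro mult_right_mono mult_left_mono) auto
  also have "\<dots> = (4*D0)^k * (2^N * fact N * X) * fact (k+m)" by (simp add: power_mult_distrib algebra_simps)
  finally show ?thesis .
qed



theorem mainTheorem6:
  fixes n :: nat
    and E11 E10 E01 E00 E11s E10s E01s E00s :: "'h::chilbert \<Rightarrow> 'h"
    and F G Fs Gs :: "nat \<Rightarrow> 'h \<Rightarrow> 'h"
    and S Ss :: "nat \<Rightarrow> nat \<Rightarrow> 'h \<Rightarrow> 'h"
  assumes n_pos: "1 \<le> n"
    and bdd_E: "bounded_cop E11" "bounded_cop E10" "bounded_cop E01" "bounded_cop E00"
    and adj_E: "is_adjoint E11 E11s" "is_adjoint E10 E10s" "is_adjoint E01 E01s" "is_adjoint E00 E00s"
    and bdd_FG: "\<And>i. 1 \<le> i \<Longrightarrow> i \<le> n \<Longrightarrow> bounded_cop (F i) \<and> bounded_cop (G i)"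
    and adj_FG: "\<And>i. 1 \<le> i \<Longrightarrow> i \<le> n \<Longrightarrow> is_adjoint (F i) (Fs i) \<and> is_adjoint (G i) (Gs i)"
    and bdd_S: "\<And>i j. 1 \<le> i \<Longrightarrow> i \<le> n \<Longrightarrow> 1 \<le> j \<Longrightarrow> j \<le> n \<Longrightarrow> bounded_cop (S i j)"
    and adj_S: "\<And>i j. 1 \<le> i \<Longrightarrow> i \<le> n \<Longrightarrow> 1 \<le> j \<Longrightarrow> j \<le> n \<Longrightarrow> is_adjoint (S i j) (Ss i j)"
    and HP_K: "\<And>u. u \<in> Dspace \<Longrightarrow>
        Kop E11 E10 E01 E00 u + Kop E11s E01s E10s E00s u
          = - (\<Sum>i\<in>{1..n}. Lop (F i) (G i) (Ldagop (Fs i) (Gs i) u))"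
    and HP_N1: "\<And>m l u. 1 \<le> m \<Longrightarrow> m \<le> n \<Longrightarrow> 1 \<le> l \<Longrightarrow> l \<le> n \<Longrightarrow> u \<in> Dspace \<Longrightarrow>
        (\<Sum>j\<in>{1..n}. lift (S m j) (lift (Ss l j) u)) = (if m = l then u else 0)"
    and HP_N2: "\<And>m l u. 1 \<le> m \<Longrightarrow> m \<le> n \<Longrightarrow> 1 \<le> l \<Longrightarrow> l \<le> n \<Longrightarrow> u \<in> Dspace \<Longrightarrow>
        (\<Sum>j\<in>{1..n}. lift (Ss j m) (lift (S j l) u)) = (if m = l then u else 0)"
  shows "\<exists>\<epsilon>>0. \<forall>u\<in>Dspace. \<exists>c :: nat \<Rightarrow> real.
           (\<forall>l. 0 \<le> c l) \<and> summable (\<lambda>l. c l * \<epsilon> ^ l) \<and>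
           (\<forall>xs. 1 \<le> length xs \<longrightarrow> (\<forall>x\<in>set xs. valid_label n x) \<longrightarrow>
              Hnorm (foldr (opval n E11 E10 E01 E00 E11s E10s E01s E00s F G Fs Gs S Ss) xs u)
                \<le> c (length xs) * sqrt (fact (length xs + length (filter is_K_label xs))))"
proof -
  obtain B1 where B1: "bnd E11 B1" using bounded_bnd[OF bdd_E(1)] by blast
  obtain B2 where B2: "bnd E10 B2" using bounded_bnd[OF bdd_E(2)] by blast
  obtain B3 where B3: "bnd E01 B3" using bounded_bnd[OF bdd_E(3)] by blast
  obtain B4 where B4: "bnd E00 B4" using bounded_bnd[OF bdd_E(4)] by blast
  have "\<forall>i\<in>{1..n}. \<exists>B. bnd (F i) B" by (intro ballI bounded_bnd) (use bdd_FG in auto)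
  then obtain BF where BF: "BF \<ge> 1" "\<forall>i\<in>{1..n}. bnd (F i) BF" using bnd_common[of "{1..n}"] by blast
  have "\<forall>i\<in>{1..n}. \<exists>B. bnd (G i) B" by (intro ballI bounded_bnd) (use bdd_FG in auto)
  then obtain BG where BG: "BG \<ge> 1" "\<forall>i\<in>{1..n}. bnd (G i) BG" using bnd_common[of "{1..n}"] by blast
  have "\<forall>p\<in>{1..n}\<times>{1..n}. \<exists>B. bnd (S (fst p) (snd p)) B" by (intro ballI bounded_bnd) (use bdd_S in auto)
  then obtain BS where BS: "BS \<ge> 1" "\<forall>p\<in>{1..n}\<times>{1..n}. bnd (S (fst p) (snd p)) BS"
    using bnd_common[of "{1..n}\<times>{1..n}" "\<lambda>p. S (fst p) (snd p)"] by blast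
  have ge1: "1 \<le> B1" "1 \<le> B2" "1 \<le> B3" "1 \<le> B4" using B1 B2 B3 B4 unfolding bnd_def by auto
  define B where "B = B1 + B2 + B3 + B4 + BF + BG + BS"
  have B_ge: "1 \<le> B" "B1 \<le> B" "B2 \<le> B" "B3 \<le> B" "B4 \<le> B" "BF \<le> B" "BG \<le> B" "BS \<le> B"
    unfolding B_def using ge1 BF BG BS by linarith+
  have bE: "bnd E11 B" "bnd E10 B" "bnd E01 B" "bnd E00 B"
    using bnd_mono B1 B2 B3 B4 B_ge by blast+
  have bEs: "bnd E11s B" "bnd E10s B" "bnd E01s B" "bnd E00s B"
    using adjoint_bnd bE adj_E by blast+
  have bFG: "\<And>i. i \<in> {1..n} \<Longrightarrow> bnd (F i) B \<and> bnd (G i) B \<and> bnd (Fs i) B \<and> bnd (Gs i) B"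
  proof -
    fix i assume i: "i \<in> {1..n}"
    have a: "bnd (F i) B" "bnd (G i) B" using BF BG i B_ge bnd_mono by blast+
    moreover have "bnd (Fs i) B" "bnd (Gs i) B"
    by (rule adjoint_bnd[OF a(1)], use adj_FG i in auto) (rule adjoint_bnd[OF a(2)], use adj_FG i in auto)
    ultimately show "bnd (F i) B \<and> bnd (G i) B \<and> bnd (Fs i) B \<and> bnd (Gs i) B" by blast
  qed
  have bS: "\<And>i j. i \<in> {1..n} \<Longrightarrow> j \<in> {1..n} \<Longrightarrow> bnd (S i j) B \<and> bnd (Ss i j) B"
  proof -
    fix i j assume i: "i \<in> {1..n}" and j: "j \<in> {1..n}"
    have "bnd (S (fst (i,j)) (snd (i,j))) BS" using BS i j by blast
    then have a: "bnd (S i j) B" using B_ge bnd_mono by auto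
    moreover have "bnd (Ss i j) B" by (rule adjoint_bnd[OF a]) (use adj_S i j in auto)
    ultimately show "bnd (S i j) B \<and> bnd (Ss i j) B" by blast
  qed
  define D0 where "D0 = 2^n * (real n + 1) * 64 * B^4"
  have Bsq: "1 \<le> B^2" "B^2 \<le> B^4" using B_ge
    by (simp_all add: one_le_power power_increasing)
  have P1: "1 \<le> (2::real)^n * (real n + 1)"
  proof -
    have "(1::real) \<le> 2^n" by simp
    moreover have "(1::real) \<le> real n + 1" by simp
    ultimately show ?thesis using mult_mono[of 1 "2^n" 1 "real n + 1"] by simp
  qed
  have D0a: "64 * B^4 \<le> D0" unfolding D0_def
    using mult_right_mono[OF P1, of "64 * B^4"] Bsq by simp
  have D0_ge: "1 \<le> D0" using D0a Bsq by simp
  have c_K: "22 * B^2 \<le> D0" using D0a Bsq by simp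
  have c_L: "4 * B^2 \<le> D0" using D0a Bsq by simp
  have c_N: "B^2 \<le> D0" using D0a Bsq by simp
  have c_M: "2^n * real n * (B^2 * (4*B^2)) \<le> D0" "2^n * real n * (4*B^2 * B^2) \<le> D0"
  proof -
    have "(2::real)^n * real n \<le> 2^n * (real n + 1)" by simp
    then have "(2::real)^n * real n * (4 * B^4) \<le> 2^n * (real n + 1) * (64 * B^4)"
      by (intro mult_mono) auto
    moreover have "D0 = 2^n * (real n + 1) * (64 * B^4)" unfolding D0_def by (simp only: mult.assoc)
    ultimately have H: "(2::real)^n * real n * (4 * B^4) \<le> D0" by linarith
    have E: "B^2 * (4*B^2) = 4 * B^4" "4*B^2 * B^2 = 4 * B^4" by (simp_all add: power2_eq_square power4_eq_xxxx)
    show "2^n * real n * (B^2 * (4*B^2)) \<le> D0" by (subst E(1)) (rule H)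
    show "2^n * real n * (4*B^2 * B^2) \<le> D0" by (subst E(2)) (rule H)
  qed
  let ?ov = "opval n E11 E10 E01 E00 E11s E10s E01s E00s F G Fs Gs S Ss"
  have ops: "\<And>x. valid_label n x \<Longrightarrow> opb (?ov x) D0 (if is_K_label x then 2 else 1)"
  proof -
    fix x assume v: "valid_label n x"
    show "opb (?ov x) D0 (if is_K_label x then 2 else 1)"
    proof (cases x)
      case OK then show ?thesis using opb_Kop[OF bE] c_K Bsq by (auto intro: opb_mono)
    next
      case OKs then show ?thesis using opb_Kop[OF bEs(1) bEs(3) bEs(2) bEs(4)] c_K Bsq by (auto intro: opb_mono)
    next
      case (OL i) then have "i \<in> {1..n}" using v by simp
      then have h: "bnd (F i) B" "bnd (G i) B" using bFG by auto
      show ?thesis using opb_mono[OF opb_Lop[OF h], of D0 1] c_L OL by simp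
    next
      case (OLs i) then have "i \<in> {1..n}" using v by simp
      then have h: "bnd (Fs i) B" "bnd (Gs i) B" using bFG by auto
      show ?thesis using opb_mono[OF opb_Ldag[OF h], of D0 1] c_L OLs by simp
    next
      case (OM i) then have i: "i \<in> {1..n}" using v by simp
      have "opb (\<lambda>u. - (\<Sum>j\<in>{1..n}. lift (S i j) (Ldagop (Fs j) (Gs j) u))) ((2::real)^n * real n * (B^2 * (4*B^2))) 1"
        by (rule opb_M) (use bFG bS i in auto)
      then show ?thesis using OM c_M by (auto intro: opb_mono)
    next
      case (OMs i) then have i: "i \<in> {1..n}" using v by simp
      have "opb (\<lambda>u. - (\<Sum>j\<in>{1..n}. Lop (F j) (G j) (lift (Ss i j) u))) ((2::real)^n * real n * (4*B^2 * B^2)) 1"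
        by (rule opb_Ms) (use bFG bS i in auto)
      then show ?thesis using OMs c_M by (auto intro: opb_mono)
    next
      case (ON i j) then have "i \<in> {1..n}" "j \<in> {1..n}" using v by auto
      then have h: "bnd (S i j) B" using bS by auto
      show ?thesis using opb_mono[OF opb_lift[OF h], of D0 1] c_N ON by simp
    next
      case (ONs i j) then have "i \<in> {1..n}" "j \<in> {1..n}" using v by auto
      then have h: "bnd (Ss i j) B" using bS by auto
      show ?thesis using opb_mono[OF opb_lift[OF h], of D0 1] c_N ONs by simp
    qed
  qed
  define r where "r = sqrt (4 * D0)"
  have r_pos: "0 < r" unfolding r_def using D0_ge by simp
  define \<epsilon> where "\<epsilon> = 1 / (2 * r)"
  have eps_pos: "\<epsilon> > 0" unfolding \<epsilon>_def using r_pos by simp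
  have main: "\<forall>u\<in>Dspace. \<exists>c :: nat \<Rightarrow> real.
           (\<forall>l. 0 \<le> c l) \<and> summable (\<lambda>l. c l * \<epsilon> ^ l) \<and>
           (\<forall>xs. 1 \<le> length xs \<longrightarrow> (\<forall>x\<in>set xs. valid_label n x) \<longrightarrow>
              Hnorm (foldr ?ov xs u)
                \<le> c (length xs) * sqrt (fact (length xs + length (filter is_K_label xs))))"
  proof
    fix u :: "nat \<Rightarrow> 'h" assume u: "u \<in> Dspace"
    then obtain N where "{i. u i \<noteq> 0} \<subseteq> {..<N}" unfolding Dspace_def using finite_nat_bounded by blast
    then have sN: "supp_le N u" unfolding supp_le_def by auto
    define C where "C = sqrt (2^N * fact N * N2 N u)"
    have C0: "0 \<le> C" unfolding C_def using N2_nonneg[of N u] by simp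
    define c where "c = (\<lambda>l::nat. C * r ^ l)"
    have "\<forall>l. 0 \<le> c l" unfolding c_def using C0 r_pos by simp
    moreover have "summable (\<lambda>l. c l * \<epsilon> ^ l)"
    proof -
      have "\<And>l. c l * \<epsilon> ^ l = C * (1/2) ^ l"
        unfolding c_def \<epsilon>_def using r_pos by (simp add: power_mult_distrib[symmetric] mult.assoc)
      moreover have "summable (\<lambda>l. C * (1/2::real) ^ l)"
        by (rule summable_mult) (rule summable_geometric, simp)
      ultimately show ?thesis by simp
    qed
    moreover have "\<forall>xs. 1 \<le> length xs \<longrightarrow> (\<forall>x\<in>set xs. valid_label n x) \<longrightarrow>
              Hnorm (foldr ?ov xs u)
                \<le> c (length xs) * sqrt (fact (length xs + length (filter is_K_label xs)))"
    proof (intro allI impI)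
      fix xs assume "1 \<le> length xs" and val: "\<forall>x\<in>set xs. valid_label n x"
      define k where "k = length xs"
      define m where "m = length (filter is_K_label xs)"
      have mk: "m \<le> k" unfolding m_def k_def by simp
      have fb: "supp_le (N + k) (foldr ?ov xs u) \<and>
         N2 (N + k) (foldr ?ov xs u) \<le> D0 ^ k * fact (N + k + m) * N2 N u"
        unfolding k_def m_def by (rule fold_bound) (use ops val D0_ge sN in auto)
      have "Hnorm (foldr ?ov xs u) = sqrt (N2 (N + k) (foldr ?ov xs u))"
        using fb Hnorm_N2 by blast
      also have "\<dots> \<le> sqrt (D0 ^ k * fact (N + k + m) * N2 N u)" using fb by simp
      also have "\<dots> \<le> sqrt ((4*D0)^k * (2^N * fact N * N2 N u) * fact (k+m))"
        using final_ineq[OF D0_ge N2_nonneg mk] by simp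
      also have "\<dots> = c k * sqrt (fact (k+m))"
        unfolding c_def C_def r_def by (simp add: real_sqrt_mult real_sqrt_power)
      finally show "Hnorm (foldr ?ov xs u) \<le> c (length xs) * sqrt (fact (length xs + length (filter is_K_label xs)))"
        unfolding k_def m_def .
    qed
    ultimately show "\<exists>c :: nat \<Rightarrow> real.
           (\<forall>l. 0 \<le> c l) \<and> summable (\<lambda>l. c l * \<epsilon> ^ l) \<and>
           (\<forall>xs. 1 \<le> length xs \<longrightarrow> (\<forall>x\<in>set xs. valid_label n x) \<longrightarrow>
              Hnorm (foldr ?ov xs u)
                \<le> c (length xs) * sqrt (fact (length xs + length (filter is_K_label xs))))" by blast
  qed
  show ?thesis using eps_pos main by blast
qed


end
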